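(* Let $p>1$, $1\le q<\infty$, $T>0$, $I=(0,T)$, $\overline{I}=[0,T]$. Let $X$ be an $\mathbb{R}$-smooth Banach space over $\mathbb{K}\in\{\mathbb{R},\mathbb{C}\}$ and $Y$ a Banach space. For every $t\in\overline{I}$ let $\mathcal{D}(A(t))\subset\mathcal{D}(B(t))\subset X$ be subspaces and let $A(t):\mathcal{D}(A(t))\to X$, $B(t):\mathcal{D}(B(t))\to Y$ be (possibly nonlinear) operators; put $\mathcal{M}(t):=\{y\in\mathcal{D}(A(t)) : B(t)(y)=0\}$. Let $w\in C(\overline{I};X)\cap C^1(I;X)$ be a solution of $$\frac{dw}{dt}=A(t)(w)\ \text{on } I,\qquad w(0)=w_0,\qquad B(t)(w(t))=0,$$ with $w(t)\in\mathcal{M}(t)$ for $t\in I$. Let $w_\theta\in C(\overline{I};X)\cap C^1(I;X)$ with $w_\theta(t)\in\mathcal{D}(A(t))$, and define the residuals $$\mathcal{R}_{eq}(t)=\frac{dw_\theta}{dt}(t)-A(t)(w_\theta(t)),\quad \mathcal{R}_{in}=w_\theta(0)-w_0,\quad \mathcal{R}_{bn}(t)=B(t)(w_\theta(t)),$$ and the total error $\mathcal{E}:=\|w_\theta-w\|^q_{L^q(I;X)}$. Assume that for every $t\in\overline{I}$: $-A(t)$ is $(p,\psi(t))$-submonotone on $\mathcal{M}(t)$ with some function $\Lambda(t,\cdot,\cdot)\ge 0$, and $\psi(t)$ is subordinate to $B(t)$ on $\mathcal{M}(t)$ with some function $\gamma(t,\cdot,\cdot)\ge0$ and a function $\rho\in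 C(Y;\mathbb{R}^+)$ that does not depend on $t$. Assume moreover that $t\mapsto\gamma(t,w_\theta(t),w(t))$ belongs to $C(\overline{I})$ and $t\mapsto\Lambda(t,w_\theta(t),w(t))$ belongs to $L^1(I)$. Then $$\mathcal{E}\le \mathcal{C}^{\frac{q}{p}}\left(\frac{p\left(e^{\frac{q(p-1)T}{p}}-1\right)}{q(p-1)}\right)e^{q\|\Lambda(\cdot,w_\theta(\cdot),w(\cdot))\|_{L^1(I)}},$$ where $$\mathcal{C}=\|\mathcal{R}_{eq}\|^p_{L^p(I;X)}+\|\mathcal{R}_{in}\|^p+p\,\|\gamma(\cdot,w_\theta(\cdot),w(\cdot))\|_{C(\overline{I})}\,\|\rho(\mathcal{R}_{bn})\|_{L^1(I)},$$ and $\rho(\mathcal{R}_{bn})$ denotes the function $t\mapsto\rho(\mathcal{R}_{bn}(t))$.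
   Context: Gateaux $\mathbb{R}$-derivative: for $\varphi:X\to\mathbb{R}$, $D(\varphi)(y;\chi):=\lim_{\mathbb{R}\ni s\to0}\frac{\varphi(y+s\chi)-\varphi(y)}{s}$ when the limit exists. A Banach space $X$ is $\mathbb{R}$-smooth if $D(\|\cdot\|)(y;\chi)$ exists for every $y$ with $\|y\|=1$ and every $\chi\in X$ (hence, by homogeneity, for every $y\neq0$). The real $p$-form ($p>1$) is $\langle y_1,y_2\rangle_p:=\|y_2\|^{p-1}D(\|\cdot\|)(y_2;y_1)$ for $y_2\ne0$ and $\langle y_1,0\rangle_p:=0$; equivalently $\langle y_1,y_2\rangle_p=\|y_2\|^{p-2}\mathrm{Re}[y_1,y_2]$ with the semi-inner product $[\chi,y]=\|y\|\big(D(\|\cdot\|)(y;\chi)-iD(\|\cdot\|)(y;i\chi)\big)$. $(p,\psi)$-submonotone: for an operator $A:\mathcal{D}(A)\to X$, a subspace $\mathcal{M}\subset\mathcal{D}(A)$ and $\psi:\mathcal{D}(A)\times\mathcal{M}\to\mathbb{R}$, $-A$ is $(p,\psi)$-submonotone on $\mathcal{M}$ if $\langle A(\chi)-A(y),\chi-y\rangle_p\le\psi(\chi,y)+\Lambda(\chi,y)\|\chi-y\|^p$ for all $\chi\in\mathcal{D}(A)$, $y\in\mathcal{M}$, for some $\Lambda(\chi,y)\ge0$. Subordinate: for $\mathcal{M}\subset\mathcal{D}_\psi\subset\mathcal{D}(B)$, $B:\mathcal{D}(B)\to Y$ and $\psi:\mathcal{D}_\psi\times\mathcal{M}\to\mathbb{R}$,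 $\psi$ is subordinate to $B$ on $\mathcal{M}$ if there is $\rho\in C(Y;\mathbb{R}^+)$ with $\rho(\xi)\to0$ as $\xi\to0$ and $|\psi(\chi,y)|\le\gamma(\chi,y)\rho(B(\chi)-B(y))$ for all $\chi\in\mathcal{D}_\psi$, $y\in\mathcal{M}$, for some $\gamma(\chi,y)\ge0$. (Here $\mathcal{D}_\psi=\mathcal{D}(A(t))$.) $L^q(I;X)$ denotes the Bochner space. *)

theory Defs
  imports "HOL-Analysis.Analysis"
begin

definition norm_dq :: "'a::real_normed_vector \<Rightarrow> 'a \<Rightarrow> real \<Rightarrow> real" where
  "norm_dq y chi s = (norm (y + s *\<^sub>R chi) - norm y) / s"

definition gateaux_norm :: "'a::real_normed_vector \<Rightarrow> 'a \<Rightarrow> real" where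
  "gateaux_norm y chi = Lim (at 0) (norm_dq y chi)"

definition R_smooth :: "'a::real_normed_vector itself \<Rightarrow> bool" where
  "R_smooth _ \<longleftrightarrow> (\<forall>(y::'a) chi. norm y = 1 \<longrightarrow> (\<exists>d. (norm_dq y chi \<longlongrightarrow> d) (at 0)))"

definition p_form :: "real \<Rightarrow> 'a::real_normed_vector \<Rightarrow> 'a \<Rightarrow> real" where
  "p_form p y1 y2 = (if y2 = 0 then 0 else norm y2 powr (p - 1) * gateaux_norm y2 y1)"

definition p_psi_submonotone ::
  "real \<Rightarrow> ('a::real_normed_vector \<Rightarrow> 'a) \<Rightarrow> 'a set \<Rightarrow> 'a set \<Rightarrow> ('a \<Rightarrow> 'a \<Rightarrow> real)
     \<Rightarrow> ('a \<Rightarrow> 'a \<Rightarrow> real) \<Rightarrow> bool" where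
  "p_psi_submonotone p A DA M psi Lam \<longleftrightarrow>
     M \<subseteq> DA \<and>
     (\<forall>chi\<in>DA. \<forall>y\<in>M. Lam chi y \<ge> 0 \<and>
        p_form p (A chi - A y) (chi - y) \<le> psi chi y + Lam chi y * norm (chi - y) powr p)"

definition subordinate ::
  "('a \<Rightarrow> 'a \<Rightarrow> real) \<Rightarrow> ('a \<Rightarrow> 'b::real_normed_vector) \<Rightarrow> 'a set \<Rightarrow> 'a set
     \<Rightarrow> ('a \<Rightarrow> 'a \<Rightarrow> real) \<Rightarrow> ('b \<Rightarrow> real) \<Rightarrow> bool" where
  "subordinate psi B Dpsi M gam rho \<longleftrightarrow>
     continuous_on UNIV rho \<and> (\<forall>xi. rho xi \<ge> 0) \<and> (rho \<longlongrightarrow> 0) (at 0) \<and>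
     (\<forall>chi\<in>Dpsi. \<forall>y\<in>M. gam chi y \<ge> 0 \<and> \<bar>psi chi y\<bar> \<le> gam chi y * rho (B chi - B y))"

definition enn_powr :: "ennreal \<Rightarrow> real \<Rightarrow> ennreal" where
  "enn_powr x a = (if x = top then top else ennreal (enn2real x powr a))"

end

theory Submission
  imports Defs
begin


lemma dq_scale:
  fixes y chi :: "'a::real_normed_vector"
  assumes "y \<noteq> 0"
  shows "norm_dq y chi s = norm_dq (y /\<^sub>R norm y) chi (s / norm y)"
proof -
  let ?n = "norm y"
  have n: "?n > 0" using assms by simp
  have "y + s *\<^sub>R chi = ?n *\<^sub>R (y /\<^sub>R ?n + (s / ?n) *\<^sub>R chi)"
    using n by (simp add: scaleR_add_right)
  hence e: "norm (y + s *\<^sub>R chi) = ?n * norm (y /\<^sub>R ?n + (s / ?n) *\<^sub>R chi)"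
    using n by simp
  have u: "norm (y /\<^sub>R ?n) = 1" using n by simp
  show ?thesis
    unfolding norm_dq_def e u using n
    by (cases "s = 0") (auto simp: field_simps)
qed

lemma gateaux_tendsto:
  fixes y chi :: "'a::real_normed_vector"
  assumes sm: "R_smooth TYPE('a)" and y: "y \<noteq> 0"
  shows "(norm_dq y chi \<longlongrightarrow> gateaux_norm y chi) (at 0)"
proof -
  let ?u = "y /\<^sub>R norm y"
  have "norm ?u = 1" using y by simp
  then obtain d where d: "(norm_dq ?u chi \<longlongrightarrow> d) (at 0)"
    using sm unfolding R_smooth_def by blast
  have f: "filterlim (\<lambda>s. s / norm y) (at 0) (at 0)"
  proof (rule filterlim_atI)
    show "((\<lambda>s. s / norm y) \<longlongrightarrow> 0) (at 0)"
      using \<open>y \<noteq> 0\<close> by (auto intro!: tendsto_eq_intros)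
    show "\<forall>\<^sub>F x in at 0. x / norm y \<noteq> 0" using \<open>y \<noteq> 0\<close> by (auto simp: eventually_at_filter intro!: always_eventually)
  qed
  have "((\<lambda>s. norm_dq ?u chi (s / norm y)) \<longlongrightarrow> d) (at 0)"
    using filterlim_compose[OF d f] .
  hence L: "(norm_dq y chi \<longlongrightarrow> d) (at 0)"
  proof -
    have "norm_dq y chi = (\<lambda>s. norm_dq ?u chi (s / norm y))"
      using dq_scale[OF \<open>y \<noteq> 0\<close>, of chi] by (rule ext)
    thus ?thesis using \<open>((\<lambda>s. norm_dq ?u chi (s / norm y)) \<longlongrightarrow> d) (at 0)\<close> by simp
  qed
  hence "gateaux_norm y chi = d" unfolding gateaux_norm_def
    by (simp add: tendsto_Lim)
  thus ?thesis using L by simp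
qed

lemma dq_abs_le:
  fixes y chi :: "'a::real_normed_vector"
  assumes "s \<noteq> 0"
  shows "\<bar>norm_dq y chi s\<bar> \<le> norm chi"
proof -
  have "\<bar>norm (y + s *\<^sub>R chi) - norm y\<bar> \<le> norm (s *\<^sub>R chi)"
    by (metis add_diff_cancel_left' norm_triangle_ineq3)
  also have "\<dots> = \<bar>s\<bar> * norm chi" by simp
  finally show ?thesis unfolding norm_dq_def using assms
    by (simp add: abs_divide divide_le_eq mult.commute)
qed

lemma gateaux_le_norm:
  fixes y chi :: "'a::real_normed_vector"
  assumes sm: "R_smooth TYPE('a)" and y: "y \<noteq> 0"
  shows "gateaux_norm y chi \<le> norm chi"
proof (rule tendsto_upperbound[OF gateaux_tendsto[OF sm y]])
  show "\<forall>\<^sub>F x in at 0. norm_dq y chi x \<le> norm chi"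
    by (auto simp: eventually_at_filter intro!: always_eventually dq_abs_le[THEN abs_le_D1])
qed simp

lemma dq_subadd:
  fixes y a b :: "'a::real_normed_vector"
  assumes s: "s > 0"
  shows "norm_dq y (a + b) s \<le> norm_dq y a (2 * s) + norm_dq y b (2 * s)"
proof -
  have "y + s *\<^sub>R (a + b) = (1/2) *\<^sub>R (y + (2 * s) *\<^sub>R a) + (1/2) *\<^sub>R (y + (2 * s) *\<^sub>R b)"
    by (simp add: algebra_simps scaleR_add_right flip: scaleR_add_left)
  hence "norm (y + s *\<^sub>R (a + b)) \<le> (1/2) * norm (y + (2 * s) *\<^sub>R a) + (1/2) * norm (y + (2 * s) *\<^sub>R b)"
    by (metis (no_types) norm_scaleR norm_triangle_ineq abs_divide abs_one abs_numeral
        order_trans order_refl)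
  hence "2 * norm (y + s *\<^sub>R (a + b)) - 2 * norm y \<le> (norm (y + (2 * s) *\<^sub>R a) - norm y) + (norm (y + (2 * s) *\<^sub>R b) - norm y)"
    by simp
  hence "(2 * norm (y + s *\<^sub>R (a + b)) - 2 * norm y) / (2 * s) \<le> ((norm (y + (2 * s) *\<^sub>R a) - norm y) + (norm (y + (2 * s) *\<^sub>R b) - norm y)) / (2 * s)"
    using s by (simp add: divide_right_mono)
  moreover have "(2 * norm (y + s *\<^sub>R (a + b)) - 2 * norm y) / (2 * s) = norm_dq y (a + b) s"
    unfolding norm_dq_def using s by (auto simp: field_simps)
  moreover have "((norm (y + (2 * s) *\<^sub>R a) - norm y) + (norm (y + (2 * s) *\<^sub>R b) - norm y)) / (2 * s) = norm_dq y a (2 * s) + norm_dq y b (2 * s)"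
    unfolding norm_dq_def add_divide_distrib[symmetric] by (rule arg_cong[where f="\<lambda>x. x / (2 * s)"]) simp
  ultimately show ?thesis by simp
qed

lemma gateaux_subadd:
  fixes y a b :: "'a::real_normed_vector"
  assumes sm: "R_smooth TYPE('a)" and y: "y \<noteq> 0"
  shows "gateaux_norm y (a + b) \<le> gateaux_norm y a + gateaux_norm y b"
proof -
  have f: "filterlim (\<lambda>s. 2 * s) (at 0) (at_right (0::real))"
  proof (rule filterlim_atI)
    show "((\<lambda>s. 2 * s) \<longlongrightarrow> (0::real)) (at_right 0)"
      by (auto intro!: tendsto_eq_intros)
    show "\<forall>\<^sub>F x in at_right 0. 2 * x \<noteq> (0::real)" by (auto simp: eventually_at_filter)
  qed
  have r: "\<And>c. (norm_dq y c \<longlongrightarrow> gateaux_norm y c) (at_right 0)"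
    using gateaux_tendsto[OF sm y] by (rule tendsto_within_subset) simp
  have ra: "\<And>c. ((\<lambda>s. norm_dq y c (2 * s)) \<longlongrightarrow> gateaux_norm y c) (at_right 0)"
    using filterlim_compose[OF gateaux_tendsto[OF sm y] f] .
  show ?thesis
  proof (rule tendsto_le[OF _ tendsto_add[OF ra ra] r])
    show "\<forall>\<^sub>F x in at_right 0. norm_dq y (a + b) x \<le> norm_dq y a (2 * x) + norm_dq y b (2 * x)"
      by (auto simp: eventually_at_filter intro!: dq_subadd always_eventually)
  qed simp
qed



lemma vdiff_small:
  fixes e :: "real \<Rightarrow> 'a::real_normed_vector"
  assumes d: "(e has_vector_derivative e') (at t)"
  shows "((\<lambda>h. norm (e (t + h) - e t - h *\<^sub>R e') / \<bar>h\<bar>) \<longlongrightarrow> 0) (at 0)"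
  using d unfolding has_vector_derivative_def has_derivative_at by simp

lemma norm_has_deriv:
  fixes e :: "real \<Rightarrow> 'a::real_normed_vector"
  assumes sm: "R_smooth TYPE('a)" and d: "(e has_vector_derivative e') (at t)" and nz: "e t \<noteq> 0"
  shows "((\<lambda>s. norm (e s)) has_real_derivative gateaux_norm (e t) e') (at t)"
  unfolding DERIV_def
proof -
  let ?r = "\<lambda>h. (norm (e (t + h)) - norm (e t + h *\<^sub>R e')) / h"
  have r0: "(?r \<longlongrightarrow> 0) (at 0)"
  proof (rule tendsto_0_le[OF vdiff_small[OF d], of _ 1])
    show "\<forall>\<^sub>F x in at 0. norm (?r x) \<le> norm (norm (e (t + x) - e t - x *\<^sub>R e') / \<bar>x\<bar>) * 1"
    proof (rule always_eventually, rule allI)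
      fix x
      have "\<bar>norm (e (t + x)) - norm (e t + x *\<^sub>R e')\<bar> \<le> norm (e (t + x) - e t - x *\<^sub>R e')"
        by (metis diff_diff_eq norm_triangle_ineq3)
      thus "norm (?r x) \<le> norm (norm (e (t + x) - e t - x *\<^sub>R e') / \<bar>x\<bar>) * 1"
        by (simp add: abs_divide divide_right_mono)
    qed
  qed
  have "((\<lambda>h. norm_dq (e t) e' h + ?r h) \<longlongrightarrow> gateaux_norm (e t) e' + 0) (at 0)"
    by (intro tendsto_add gateaux_tendsto[OF sm nz] r0)
  moreover have "\<forall>\<^sub>F h in at 0. norm_dq (e t) e' h + ?r h = (norm (e (t + h)) - norm (e t)) / h"
    by (auto simp: eventually_at_filter norm_dq_def diff_divide_distrib intro!: always_eventually)
  ultimately show "((\<lambda>h. (norm (e (t + h)) - norm (e t)) / h) \<longlongrightarrow> gateaux_norm (e t) e') (at 0)"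
    by (simp add: tendsto_cong)
qed

lemma normp_has_deriv_zero:
  fixes e :: "real \<Rightarrow> 'a::real_normed_vector"
  assumes p: "p > 1" and d: "(e has_vector_derivative e') (at t)" and z: "e t = 0"
  shows "((\<lambda>s. norm (e s) powr p) has_real_derivative 0) (at t)"
  unfolding DERIV_def
proof -
  define M where "M = norm e' + 1"
  have M: "M > 0" unfolding M_def by (simp add: add_nonneg_pos)
  have ev: "\<forall>\<^sub>F h in at 0. norm (e (t + h) - e t - h *\<^sub>R e') / \<bar>h\<bar> < 1"
    using vdiff_small[OF d] by (rule order_tendstoD) simp
  have lim: "((\<lambda>h::real. M powr p * \<bar>h\<bar> powr (p - 1)) \<longlongrightarrow> 0) (at 0)"
  proof -
    have "((\<lambda>h::real. \<bar>h\<bar> powr (p - 1)) \<longlongrightarrow> 0) (at 0)"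
      by (rule tendsto_zero_powrI) (auto intro!: tendsto_eq_intros simp: p)
    from tendsto_mult_left[OF this, of "M powr p"] show ?thesis by simp
  qed
  show "((\<lambda>h. (norm (e (t + h)) powr p - norm (e t) powr p) / h) \<longlongrightarrow> 0) (at 0)"
  proof (rule tendsto_0_le[OF lim, of _ 1])
    show "\<forall>\<^sub>F h in at 0. norm ((norm (e (t + h)) powr p - norm (e t) powr p) / h)
            \<le> norm (M powr p * \<bar>h\<bar> powr (p - 1)) * 1"
      using ev
    proof (rule eventually_mono)
      fix h :: real
      assume h: "norm (e (t + h) - e t - h *\<^sub>R e') / \<bar>h\<bar> < 1"
      show "norm ((norm (e (t + h)) powr p - norm (e t) powr p) / h)
            \<le> norm (M powr p * \<bar>h\<bar> powr (p - 1)) * 1"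
      proof (cases "h = 0")
        case True thus ?thesis by simp
      next
        case False
        hence hp: "\<bar>h\<bar> > 0" by simp
        have "norm (e (t + h) - e t - h *\<^sub>R e') < \<bar>h\<bar>"
          using h hp by (simp add: divide_less_eq)
        hence "norm (e (t + h)) < \<bar>h\<bar> + \<bar>h\<bar> * norm e'"
          using z norm_triangle_ineq2[of "e (t + h)" "h *\<^sub>R e'"] by simp
        hence n: "norm (e (t + h)) \<le> M * \<bar>h\<bar>" unfolding M_def by (simp add: algebra_simps)
        have "norm (e (t + h)) powr p \<le> (M * \<bar>h\<bar>) powr p"
          using n p by (intro powr_mono2) auto
        also have "\<dots> = M powr p * \<bar>h\<bar> powr (p - 1) * \<bar>h\<bar>"
          using M hp by (simp add: powr_mult powr_diff mult.assoc)
        finally have "norm (e (t + h)) powr p / \<bar>h\<bar> \<le> M powr p * \<bar>h\<bar> powr (p - 1)"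
          using hp by (simp add: divide_le_eq)
        thus ?thesis using z p by (simp add: abs_divide)
      qed
    qed
  qed
qed



lemma gronwall_c:
  fixes g a :: "real \<Rightarrow> real"
  assumes gc: "continuous_on {0..T} g" and g0: "\<And>t. t \<in> {0..T} \<Longrightarrow> 0 \<le> g t"
    and ai: "a integrable_on {0..T}" and a0: "\<And>t. t \<in> {0..T} \<Longrightarrow> 0 \<le> a t"
    and agi: "(\<lambda>s. a s * g s) integrable_on {0..T}"
    and K: "0 \<le> K"
    and ineq: "\<And>t. t \<in> {0..T} \<Longrightarrow> g t \<le> K + integral {0..t} (\<lambda>s. a s * g s)"
    and c: "c > 1"
    and t: "t \<in> {0..T}"
  shows "g t \<le> K * exp (c * integral {0..t} a)"
proof -
  define U where "U s = K + integral {0..s} (\<lambda>s. a s * g s)" for s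
  define A where "A s = integral {0..s} a" for s
  define \<Phi> where "\<Phi> s = K * exp (c * A s)" for s
  have sub: "\<And>(f::real\<Rightarrow>real) x y. f integrable_on {0..T} \<Longrightarrow> 0 \<le> x \<Longrightarrow> x \<le> y \<Longrightarrow> y \<le> T \<Longrightarrow> f integrable_on {x..y}"
    by (erule integrable_subinterval_real) auto
  have comb: "\<And>(f::real\<Rightarrow>real) x y. f integrable_on {0..T} \<Longrightarrow> 0 \<le> x \<Longrightarrow> x \<le> y \<Longrightarrow> y \<le> T \<Longrightarrow>
      integral {0..y} f = integral {0..x} f + integral {x..y} f"
  proof -
    fix f :: "real \<Rightarrow> real" and x y :: real
    assume f: "f integrable_on {0..T}" and xy: "0 \<le> x" "x \<le> y" "y \<le> T"
    have "f integrable_on {0..y}" using sub[OF f] xy by simp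
    from Henstock_Kurzweil_Integration.integral_combine[OF xy(1,2) this] show "integral {0..y} f = integral {0..x} f + integral {x..y} f"
      by simp
  qed
  have Udiff: "\<And>x y. 0 \<le> x \<Longrightarrow> x \<le> y \<Longrightarrow> y \<le> T \<Longrightarrow> U y - U x = integral {x..y} (\<lambda>s. a s * g s)"
  proof -
    fix x y :: real assume xy: "0 \<le> x" "x \<le> y" "y \<le> T"
    show "U y - U x = integral {x..y} (\<lambda>s. a s * g s)"
      unfolding U_def comb[OF agi xy] by simp
  qed
  have Adiff: "\<And>x y. 0 \<le> x \<Longrightarrow> x \<le> y \<Longrightarrow> y \<le> T \<Longrightarrow> A y - A x = integral {x..y} a"
  proof -
    fix x y :: real assume xy: "0 \<le> x" "x \<le> y" "y \<le> T"
    show "A y - A x = integral {x..y} a"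
      unfolding A_def comb[OF ai xy] by simp
  qed
  have Umono: "\<And>x y. 0 \<le> x \<Longrightarrow> x \<le> y \<Longrightarrow> y \<le> T \<Longrightarrow> U x \<le> U y"
  proof -
    fix x y :: real assume xy: "0 \<le> x" "x \<le> y" "y \<le> T"
    have "0 \<le> integral {x..y} (\<lambda>s. a s * g s)"
      using xy by (intro Henstock_Kurzweil_Integration.integral_nonneg sub[OF agi]) (auto intro!: mult_nonneg_nonneg a0 g0)
    thus "U x \<le> U y" using Udiff[OF xy] by simp
  qed
  have Apos: "\<And>x y. 0 \<le> x \<Longrightarrow> x \<le> y \<Longrightarrow> y \<le> T \<Longrightarrow> A x \<le> A y"
  proof -
    fix x y :: real assume xy: "0 \<le> x" "x \<le> y" "y \<le> T"
    have "0 \<le> integral {x..y} a"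
      using xy by (intro Henstock_Kurzweil_Integration.integral_nonneg sub[OF ai]) (auto intro!: a0)
    thus "A x \<le> A y" using Adiff[OF xy] by simp
  qed
  have U0: "U 0 = K" unfolding U_def by simp
  have Phi0: "\<Phi> 0 = K" unfolding \<Phi>_def A_def by simp
  have Unonneg: "\<And>x. x \<in> {0..T} \<Longrightarrow> 0 \<le> U x"
  proof -
    fix x assume x: "x \<in> {0..T}"
    hence "U 0 \<le> U x" using Umono[of 0 x] by simp
    thus "0 \<le> U x" using U0 K by simp
  qed
  have key: "\<And>x y. 0 \<le> x \<Longrightarrow> x \<le> y \<Longrightarrow> y \<le> T \<Longrightarrow> U y * (1 - (A y - A x)) \<le> U x"
  proof -
    fix x y :: real assume xy: "0 \<le> x" "x \<le> y" "y \<le> T"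
    have "integral {x..y} (\<lambda>s. a s * g s) \<le> integral {x..y} (\<lambda>s. a s * U y)"
    proof (rule Henstock_Kurzweil_Integration.integral_le)
      show "(\<lambda>s. a s * g s) integrable_on {x..y}" using sub[OF agi] xy by simp
      show "(\<lambda>s. a s * U y) integrable_on {x..y}" using sub[OF ai] xy by (intro integrable_on_mult_left) simp
      fix s assume s: "s \<in> {x..y}"
      have "g s \<le> U s" using ineq[of s] s xy unfolding U_def by simp
      also have "\<dots> \<le> U y" using Umono[of s y] s xy by simp
      finally show "a s * g s \<le> a s * U y" using a0[of s] s xy by (intro mult_left_mono) auto
    qed
    also have "\<dots> = integral {x..y} a * U y"
      by (simp add: integral_mult_left)
    finally show "U y * (1 - (A y - A x)) \<le> U x"
      using Udiff[OF xy] Adiff[OF xy] by (simp add: algebra_simps)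
  qed
  have Acont: "continuous_on {0..T} A"
    unfolding A_def by (rule indefinite_integral_continuous_1[OF ai])
  have Ucont: "continuous_on {0..T} U"
    unfolding U_def by (intro continuous_on_add continuous_on_const indefinite_integral_continuous_1[OF agi])
  have Phicont: "continuous_on {0..T} \<Phi>"
    unfolding \<Phi>_def by (intro continuous_intros Acont)
  have main: "\<forall>s\<in>{0..T}. U s \<le> \<Phi> s"
  proof (rule ccontr)
    assume neg: "\<not> ?thesis"
    define X where "X = {s\<in>{0..T}. \<Phi> s < U s}"
    have Xne: "X \<noteq> {}" using neg unfolding X_def by auto
    then obtain s1 where s1: "s1 \<in> X" by blast
    have bdd: "bdd_below X" unfolding X_def by (rule bdd_belowI[of _ 0]) auto
    define \<tau> where "\<tau> = Inf X"
    have tau0: "0 \<le> \<tau>" unfolding \<tau>_def using Xne by (intro cInf_greatest) (auto simp: X_def)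
    have tauT: "\<tau> \<le> T" unfolding \<tau>_def using cInf_lower[OF s1 bdd] s1 by (auto simp: X_def)
    have below: "\<And>s. s \<in> {0..T} \<Longrightarrow> s < \<tau> \<Longrightarrow> U s \<le> \<Phi> s"
    proof (rule ccontr)
      fix s assume s: "s \<in> {0..T}" "s < \<tau>" "\<not> U s \<le> \<Phi> s"
      hence "s \<in> X" unfolding X_def by auto
      hence "\<tau> \<le> s" unfolding \<tau>_def using bdd by (rule cInf_lower)
      thus False using s by simp
    qed
    have Utau: "U \<tau> \<le> \<Phi> \<tau>"
    proof (cases "\<tau> = 0")
      case True thus ?thesis using U0 Phi0 by simp
    next
      case False
      hence tp: "0 < \<tau>" using tau0 by simp
      have "0 \<le> (\<lambda>s. \<Phi> s - U s) \<tau>"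
      proof (rule continuous_ge_on_closure[where S="{0..<\<tau>}" and f="\<lambda>s. \<Phi> s - U s" and x=\<tau> and a=0])
        show "continuous_on (closure {0..<\<tau>}) (\<lambda>s. \<Phi> s - U s)"
        proof -
          have sb: "{0..\<tau>} \<subseteq> {0..T}" using tauT by auto
          have "continuous_on {0..\<tau>} (\<lambda>s. \<Phi> s - U s)"
            by (rule continuous_on_diff[OF continuous_on_subset[OF Phicont sb] continuous_on_subset[OF Ucont sb]])
          thus ?thesis using tp by simp
        qed
        show "\<tau> \<in> closure {0..<\<tau>}" using tp by simp
        fix s assume "s \<in> {0..<\<tau>}"
        thus "0 \<le> \<Phi> s - U s" using below[of s] tauT by auto
      qed
      thus ?thesis by simp
    qed
    have c1: "(c - 1) / c > 0" using c by simp
    obtain \<eta> where eta: "\<eta> > 0" and etaP: "\<And>s. s \<in> {0..T} \<Longrightarrow> dist s \<tau> < \<eta> \<Longrightarrow> dist (A s) (A \<tau>) < (c - 1) / c"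
  proof -
    have "\<forall>e>0. \<exists>d>0. \<forall>x'\<in>{0..T}. dist x' \<tau> < d \<longrightarrow> dist (A x') (A \<tau>) < e"
      using Acont tau0 tauT unfolding continuous_on_iff by auto
    with c1 show ?thesis using that by blast
  qed
    have above: "\<And>s. s \<in> {0..T} \<Longrightarrow> \<tau> \<le> s \<Longrightarrow> s < \<tau> + \<eta> \<Longrightarrow> U s \<le> \<Phi> s"
    proof -
      fix s assume s: "s \<in> {0..T}" "\<tau> \<le> s" "s < \<tau> + \<eta>"
      define \<delta> where "\<delta> = A s - A \<tau>"
      have d0: "0 \<le> \<delta>" unfolding \<delta>_def using Apos[of \<tau> s] s tau0 by auto
      have "dist s \<tau> < \<eta>" using s by (simp add: dist_real_def)
      hence "dist (A s) (A \<tau>) < (c - 1) / c" using etaP[of s] s by blast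
      hence d1: "\<delta> < (c - 1) / c" using d0 unfolding \<delta>_def dist_real_def by simp
      have "c * \<delta> < c - 1" using d1 c by (simp add: field_simps)
      hence "0 \<le> \<delta> * (c - 1 - c * \<delta>)" using d0 by (intro mult_nonneg_nonneg) auto
      moreover have "(1 - \<delta>) * (1 + c * \<delta>) = 1 + \<delta> * (c - 1 - c * \<delta>)" by (simp add: algebra_simps)
      ultimately have "1 \<le> (1 - \<delta>) * (1 + c * \<delta>)" by linarith
      also have "\<dots> \<le> (1 - \<delta>) * exp (c * \<delta>)"
      proof (rule mult_left_mono)
        show "1 + c * \<delta> \<le> exp (c * \<delta>)" by (rule exp_ge_add_one_self)
        have "(c - 1) / c < 1" using c by simp
        thus "0 \<le> 1 - \<delta>" using d1 by linarith
      qed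
      finally have e1: "1 \<le> (1 - \<delta>) * exp (c * \<delta>)" .
      have Us: "0 \<le> U s" using Unonneg s by simp
      have "U s \<le> U s * ((1 - \<delta>) * exp (c * \<delta>))"
        using mult_left_mono[OF e1 Us] by simp
      also have "\<dots> = (U s * (1 - \<delta>)) * exp (c * \<delta>)" by simp
      also have "\<dots> \<le> U \<tau> * exp (c * \<delta>)"
        using key[of \<tau> s] s tau0 unfolding \<delta>_def by (intro mult_right_mono) auto
      also have "\<dots> \<le> \<Phi> \<tau> * exp (c * \<delta>)"
        using Utau by (intro mult_right_mono) auto
      also have "\<dots> = K * (exp (c * A \<tau>) * exp (c * \<delta>))" unfolding \<Phi>_def by simp
      also have "\<dots> = K * exp (c * A \<tau> + c * \<delta>)" by (simp add: mult_exp_exp)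
      also have "c * A \<tau> + c * \<delta> = c * A s" unfolding \<delta>_def by (simp add: algebra_simps)
      also have "K * exp (c * A s) = \<Phi> s" unfolding \<Phi>_def ..
      finally show "U s \<le> \<Phi> s" .
    qed
    have "\<tau> + \<eta> \<le> \<tau>" unfolding \<tau>_def
    proof (rule cInf_greatest[OF Xne])
      fix x assume x: "x \<in> X"
      have "Inf X \<le> x" using cInf_lower[OF x bdd] .
      show "Inf X + \<eta> \<le> x"
      proof (rule ccontr)
        assume "\<not> Inf X + \<eta> \<le> x"
        hence "U x \<le> \<Phi> x" using above[of x] x \<open>Inf X \<le> x\<close> unfolding X_def \<tau>_def by auto
        thus False using x unfolding X_def by auto
      qed
    qed
    thus False using eta by simp
  qed
  have "g t \<le> U t" using ineq[OF t] unfolding U_def .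
  also have "\<dots> \<le> \<Phi> t" using main t by auto
  finally show ?thesis unfolding \<Phi>_def A_def .
qed

lemma gronwall:
  fixes g a :: "real \<Rightarrow> real"
  assumes gc: "continuous_on {0..T} g" and g0: "\<And>t. t \<in> {0..T} \<Longrightarrow> 0 \<le> g t"
    and ai: "a integrable_on {0..T}" and a0: "\<And>t. t \<in> {0..T} \<Longrightarrow> 0 \<le> a t"
    and agi: "(\<lambda>s. a s * g s) integrable_on {0..T}"
    and K: "0 \<le> K"
    and ineq: "\<And>t. t \<in> {0..T} \<Longrightarrow> g t \<le> K + integral {0..t} (\<lambda>s. a s * g s)"
    and t: "t \<in> {0..T}"
  shows "g t \<le> K * exp (integral {0..t} a)"
proof -
  have "((\<lambda>c. K * exp (c * integral {0..t} a)) \<longlongrightarrow> K * exp (1 * integral {0..t} a)) (at_right 1)"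
    by (intro tendsto_intros)
  moreover have "\<forall>\<^sub>F c in at_right 1. g t \<le> K * exp (c * integral {0..t} a)"
    by (auto simp: eventually_at_right_less eventually_at_filter
        intro!: always_eventually gronwall_c[OF gc g0 ai a0 agi K ineq _ t])
  ultimately show ?thesis
    by (intro tendsto_lowerbound) auto
qed



theorem theorem1:
  fixes p q T :: real
    and A :: "real \<Rightarrow> 'x::banach \<Rightarrow> 'x" and B :: "real \<Rightarrow> 'x \<Rightarrow> 'y::banach"
    and DA DB :: "real \<Rightarrow> 'x set"
    and psi Lam gam :: "real \<Rightarrow> 'x \<Rightarrow> 'x \<Rightarrow> real"
    and rho :: "'y \<Rightarrow> real"
    and w w' w\<theta> w\<theta>' :: "real \<Rightarrow> 'x" and w0 :: 'x
  assumes p: "p > 1" and q: "1 \<le> q" and T: "T > 0"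
    and smooth: "R_smooth TYPE('x)"
    and subsA: "\<And>t. t \<in> {0..T} \<Longrightarrow> subspace (DA t)"
    and subsB: "\<And>t. t \<in> {0..T} \<Longrightarrow> subspace (DB t)"
    and DAB: "\<And>t. t \<in> {0..T} \<Longrightarrow> DA t \<subseteq> DB t"
    (* w is a solution *)
    and w_cont: "continuous_on {0..T} w"
    and w_der: "\<And>t. t \<in> {0<..<T} \<Longrightarrow> (w has_vector_derivative w' t) (at t)"
    and w'_cont: "continuous_on {0<..<T} w'"
    and w_eq: "\<And>t. t \<in> {0<..<T} \<Longrightarrow> w' t = A t (w t)"
    and w_init: "w 0 = w0"
    and w_M: "\<And>t. t \<in> {0<..<T} \<Longrightarrow> w t \<in> {y \<in> DA t. B t y = 0}"
    (* approximation w_theta *)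
    and wt_cont: "continuous_on {0..T} w\<theta>"
    and wt_der: "\<And>t. t \<in> {0<..<T} \<Longrightarrow> (w\<theta> has_vector_derivative w\<theta>' t) (at t)"
    and wt'_cont: "continuous_on {0<..<T} w\<theta>'"
    and wt_D: "\<And>t. t \<in> {0..T} \<Longrightarrow> w\<theta> t \<in> DA t"
    (* structural hypotheses *)
    and submon: "\<And>t. t \<in> {0..T} \<Longrightarrow>
        p_psi_submonotone p (A t) (DA t) {y \<in> DA t. B t y = 0} (psi t) (Lam t)"
    and subord: "\<And>t. t \<in> {0..T} \<Longrightarrow>
        subordinate (psi t) (B t) (DA t) {y \<in> DA t. B t y = 0} (gam t) rho"
    and gam_cont: "continuous_on {0..T} (\<lambda>t. gam t (w\<theta> t) (w t))"
    and Lam_L1: "set_integrable lborel {0<..<T} (\<lambda>t. Lam t (w\<theta> t) (w t))"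
    (* the residual norms are well defined (measurability) *)
    and Req_meas: "set_borel_measurable lborel {0<..<T} (\<lambda>t. w\<theta>' t - A t (w\<theta> t))"
    and Rbn_meas: "set_borel_measurable lborel {0<..<T} (\<lambda>t. rho (B t (w\<theta> t)))"
  shows
    "(\<integral>\<^sup>+ t\<in>{0<..<T}. ennreal (norm (w\<theta> t - w t) powr q) \<partial>lborel)
      \<le> enn_powr
           ((\<integral>\<^sup>+ t\<in>{0<..<T}. ennreal (norm (w\<theta>' t - A t (w\<theta> t)) powr p) \<partial>lborel)
            + ennreal (norm (w\<theta> 0 - w0) powr p)
            + ennreal (p * (SUP t\<in>{0..T}. \<bar>gam t (w\<theta> t) (w t)\<bar>))
              * (\<integral>\<^sup>+ t\<in>{0<..<T}. ennreal (rho (B t (w\<theta> t))) \<partial>lborel))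
           (q / p)
        * ennreal (p * (exp (q * (p - 1) * T / p) - 1) / (q * (p - 1)))
        * ennreal (exp (q * (LINT t:{0<..<T}|lborel. \<bar>Lam t (w\<theta> t) (w t)\<bar>)))"
  proof -
  define S where "S = (SUP t\<in>{0..T}. \<bar>gam t (w\<theta> t) (w t)\<bar>)"
  define I1 where "I1 = (\<integral>\<^sup>+ t\<in>{0<..<T}. ennreal (norm (w\<theta>' t - A t (w\<theta> t)) powr p) \<partial>lborel)"
  define I2 where "I2 = (\<integral>\<^sup>+ t\<in>{0<..<T}. ennreal (rho (B t (w\<theta> t))) \<partial>lborel)"
  define K where "K = norm (w\<theta> 0 - w0) powr p"
  define C where "C = I1 + ennreal K + ennreal (p * S) * I2"
  define L where "L = (LINT t:{0<..<T}|lborel. \<bar>Lam t (w\<theta> t) (w t)\<bar>)"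
  define Z where "Z = p * (exp (q * (p - 1) * T / p) - 1) / (q * (p - 1))"
  have Zpos: "Z > 0"
  proof -
    have "q * (p - 1) * T / p > 0" using p q T by simp
    hence "exp (q * (p - 1) * T / p) > 1" by simp
    thus ?thesis unfolding Z_def using p q by simp
  qed
  show ?thesis
  proof (cases "C = top")
    case True
    have "enn_powr C (q / p) = top" unfolding enn_powr_def using True by simp
    hence "enn_powr C (q / p) * ennreal Z * ennreal (exp (q * L)) = top"
      using Zpos by simp
    thus ?thesis unfolding C_def I1_def I2_def K_def S_def Z_def L_def by simp
  next
    case False
    have T0: "0 \<in> {0..T}" using T by simp
    have rho0: "\<And>xi. 0 \<le> rho xi"
      using subord[OF T0] unfolding subordinate_def by blast
    have gcabs: "continuous_on {0..T} (\<lambda>t. \<bar>gam t (w\<theta> t) (w t)\<bar>)"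
      by (intro continuous_intros gam_cont)
    have bddS: "bdd_above ((\<lambda>t. \<bar>gam t (w\<theta> t) (w t)\<bar>) ` {0..T})"
      by (intro bounded_imp_bdd_above compact_imp_bounded compact_continuous_image gcabs compact_Icc)
    have Sle: "\<And>t. t \<in> {0..T} \<Longrightarrow> \<bar>gam t (w\<theta> t) (w t)\<bar> \<le> S"
      unfolding S_def by (rule cSUP_upper[OF _ bddS])
    have S0: "0 \<le> S" using Sle[OF T0] by linarith
    define e where "e = (\<lambda>s. w\<theta> s - w s)"
    define e' where "e' = (\<lambda>s. w\<theta>' s - w' s)"
    define R where "R = (\<lambda>s. w\<theta>' s - A s (w\<theta> s))"
    define g where "g = (\<lambda>s. norm (e s) powr p)"
    define lam where "lam = (\<lambda>s. \<bar>Lam s (w\<theta> s) (w s)\<bar>)"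
    define h where "h = (\<lambda>s. norm (R s) powr p + p * S * rho (B s (w\<theta> s)))"
    define a where "a = (\<lambda>s. (p - 1) + p * lam s)"
    define g' where "g' = (\<lambda>s. if e s = 0 then 0 else p * norm (e s) powr (p - 1) * gateaux_norm (e s) (e' s))"
    have h0: "\<And>s. 0 \<le> h s" unfolding h_def using p S0 rho0 by (simp add: add_nonneg_nonneg)
    have a0: "\<And>s. 0 \<le> a s" unfolding a_def lam_def using p by (simp add: add_nonneg_nonneg)
    have g0: "\<And>s. 0 \<le> g s" unfolding g_def by simp
    have dg: "\<And>t. t \<in> {0<..<T} \<Longrightarrow> (g has_real_derivative g' t) (at t) \<and> g' t \<le> h t + a t * g t"
    proof -
      fix t assume t: "t \<in> {0<..<T}"
      hence tT: "t \<in> {0..T}" by simp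
      have ed: "(e has_vector_derivative e' t) (at t)"
        unfolding e_def e'_def by (intro has_vector_derivative_diff wt_der w_der t)
      show "(g has_real_derivative g' t) (at t) \<and> g' t \<le> h t + a t * g t"
      proof (cases "e t = 0")
        case True
        have "(g has_real_derivative 0) (at t)"
          unfolding g_def by (rule normp_has_deriv_zero[OF p ed True])
        moreover have "g' t = 0" unfolding g'_def using True by simp
        moreover have "0 \<le> h t + a t * g t" using h0 a0 g0 by (simp add: add_nonneg_nonneg)
        ultimately show ?thesis by simp
      next
        case False
        define n where "n = norm (e t)"
        have n: "n > 0" unfolding n_def using False by simp
        have nd: "((\<lambda>s. norm (e s)) has_real_derivative gateaux_norm (e t) (e' t)) (at t)"
          by (rule norm_has_deriv[OF smooth ed False])
        have "((\<lambda>s. norm (e s) powr p) has_real_derivative p * norm (e t) powr (p - of_nat 1) * gateaux_norm (e t) (e' t)) (at t)"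
          by (rule DERIV_fun_powr[OF nd]) (use n n_def in simp)
        hence der: "(g has_real_derivative g' t) (at t)"
          unfolding g_def g'_def using False by simp
        define D where "D = A t (w\<theta> t) - A t (w t)"
        have e'eq: "e' t = R t + D"
          unfolding e'_def R_def D_def using w_eq[OF t] by simp
        have wM: "w t \<in> {y \<in> DA t. B t y = 0}" using w_M[OF t] .
        have wD: "w\<theta> t \<in> DA t" using wt_D[OF tT] .
        have sm: "p_form p D (e t) \<le> psi t (w\<theta> t) (w t) + Lam t (w\<theta> t) (w t) * norm (e t) powr p"
          using submon[OF tT] wM wD unfolding p_psi_submonotone_def D_def e_def by blast
        have sb: "\<bar>psi t (w\<theta> t) (w t)\<bar> \<le> gam t (w\<theta> t) (w t) * rho (B t (w\<theta> t) - B t (w t))"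
          using subord[OF tT] wM wD unfolding subordinate_def by blast
        have Bw: "B t (w t) = 0" using wM by simp
        have psiS: "psi t (w\<theta> t) (w t) \<le> S * rho (B t (w\<theta> t))"
        proof -
          have "psi t (w\<theta> t) (w t) \<le> gam t (w\<theta> t) (w t) * rho (B t (w\<theta> t))" using sb Bw by simp
          also have "\<dots> \<le> S * rho (B t (w\<theta> t))"
            using Sle[OF tT] rho0 by (intro mult_right_mono) auto
          finally show ?thesis .
        qed
        have LamL: "Lam t (w\<theta> t) (w t) * n powr p \<le> lam t * n powr p"
          unfolding lam_def by (intro mult_right_mono) auto
        have pf: "p_form p D (e t) = n powr (p - 1) * gateaux_norm (e t) D"
          unfolding p_form_def n_def using False by simp
        have G1: "gateaux_norm (e t) (e' t) \<le> gateaux_norm (e t) (R t) + gateaux_norm (e t) D"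
          unfolding e'eq by (rule gateaux_subadd[OF smooth False])
        have G2: "gateaux_norm (e t) (R t) \<le> norm (R t)"
          by (rule gateaux_le_norm[OF smooth False])
        have young: "n powr (p - 1) * norm (R t) \<le> norm (R t) powr p / p + n powr p * (p - 1) / p"
        proof -
          have "norm (R t) * n powr (p - 1) \<le> norm (R t) powr p / p + (n powr (p - 1)) powr (p / (p - 1)) / (p / (p - 1))"
            using p by (intro Youngs_inequality) (auto simp: field_simps)
          also have "(n powr (p - 1)) powr (p / (p - 1)) = n powr p"
            using p by (simp add: powr_powr)
          finally show ?thesis using p by (simp add: mult.commute)
        qed
        have npos: "0 \<le> p * n powr (p - 1)" using p by simp
        have "g' t = p * n powr (p - 1) * gateaux_norm (e t) (e' t)"
          unfolding g'_def n_def using False by simp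
        also have "\<dots> \<le> p * n powr (p - 1) * (norm (R t) + gateaux_norm (e t) D)"
          using G1 G2 npos by (intro mult_left_mono) auto
        also have "\<dots> = p * (n powr (p - 1) * norm (R t)) + p * p_form p D (e t)"
          unfolding pf by (simp add: algebra_simps)
        also have "\<dots> \<le> p * (norm (R t) powr p / p + n powr p * (p - 1) / p)
              + p * (S * rho (B t (w\<theta> t)) + lam t * n powr p)"
        proof (rule add_mono)
          show "p * (n powr (p - 1) * norm (R t)) \<le> p * (norm (R t) powr p / p + n powr p * (p - 1) / p)"
            using young p by (intro mult_left_mono) auto
          have "p_form p D (e t) \<le> S * rho (B t (w\<theta> t)) + lam t * n powr p"
            using sm psiS LamL unfolding n_def by linarith
          thus "p * p_form p D (e t) \<le> p * (S * rho (B t (w\<theta> t)) + lam t * n powr p)"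
            using p by (intro mult_left_mono) auto
        qed
        also have "\<dots> = h t + a t * g t"
          unfolding h_def a_def g_def n_def using p by (simp add: field_simps)
        finally show ?thesis using der by simp
      qed
    qed
    have econt: "continuous_on {0..T} e" unfolding e_def by (intro continuous_intros wt_cont w_cont)
    have gcont: "continuous_on {0..T} g"
      unfolding g_def using p by (intro continuous_on_powr' continuous_intros econt) auto
    have lam_si: "set_integrable lborel {0<..<T} lam"
      unfolding lam_def by (rule set_integrable_abs[OF Lam_L1])
    have lam_int: "lam integrable_on {0..T}"
      using set_borel_integral_eq_integral(1)[OF lam_si] by (simp add: integrable_on_open_interval_real)
    have L_eq: "L = integral {0..T} lam"
      unfolding L_def lam_def[symmetric] set_borel_integral_eq_integral(2)[OF lam_si]
      by (simp add: integral_open_interval_real)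
    have lam0: "\<And>s. 0 \<le> lam s" unfolding lam_def by simp
    have lam_abs: "lam absolutely_integrable_on {0..T}"
      by (rule nonnegative_absolutely_integrable_1[OF lam_int lam0])
    have gmeas: "g \<in> borel_measurable (lebesgue_on {0..T})"
      by (rule continuous_imp_measurable_on_sets_lebesgue[OF gcont]) simp
    have gbdd: "bounded (g ` {0..T})"
      by (intro compact_imp_bounded compact_continuous_image gcont compact_Icc)
    have glam: "(\<lambda>s. g s * lam s) absolutely_integrable_on {0..T}"
      by (rule absolutely_integrable_bounded_measurable_product_real[OF gmeas _ gbdd lam_abs]) simp
    have glam_int: "(\<lambda>s. g s * lam s) integrable_on {0..T}"
      using glam by (simp add: absolutely_integrable_on_def)
    have g_int: "g integrable_on {0..T}" by (rule integrable_continuous_interval[OF gcont])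
    have a_int: "a integrable_on {0..T}"
      unfolding a_def by (intro integrable_add integrable_const_ivl integrable_on_mult_right lam_int)
    have ag_eq: "(\<lambda>s. a s * g s) = (\<lambda>s. (p - 1) * g s + p * (g s * lam s))"
      unfolding a_def by (auto simp: algebra_simps)
    have ag_int: "(\<lambda>s. a s * g s) integrable_on {0..T}"
      unfolding ag_eq by (intro integrable_add integrable_on_mult_right g_int glam_int)
    (* integrability of h via the finite nonnegative integral *)
    let ?S = "{0<..<T::real}"
    have mR: "(\<lambda>x. indicator ?S x *\<^sub>R R x) \<in> borel_measurable lborel"
      using Req_meas unfolding set_borel_measurable_def R_def .
    have mr: "(\<lambda>x. indicator ?S x *\<^sub>R rho (B x (w\<theta> x))) \<in> borel_measurable lborel"
      using Rbn_meas unfolding set_borel_measurable_def .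
    have eq1: "(\<lambda>x. ennreal (norm (R x) powr p) * indicator ?S x) = (\<lambda>x. ennreal (norm (indicator ?S x *\<^sub>R R x) powr p))"
      using p by (auto simp: indicator_def fun_eq_iff)
    have eq2: "(\<lambda>x. ennreal (rho (B x (w\<theta> x))) * indicator ?S x) = (\<lambda>x. ennreal (indicator ?S x *\<^sub>R rho (B x (w\<theta> x))))"
      by (auto simp: indicator_def fun_eq_iff)
    have m1: "(\<lambda>x. ennreal (norm (R x) powr p) * indicator ?S x) \<in> borel_measurable lborel"
      unfolding eq1 using mR by measurable
    have m2: "(\<lambda>x. ennreal (rho (B x (w\<theta> x))) * indicator ?S x) \<in> borel_measurable lborel"
      unfolding eq2 using mr by measurable
    have hsplit: "(\<lambda>x. ennreal (h x) * indicator ?S x) =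
        (\<lambda>x. ennreal (norm (R x) powr p) * indicator ?S x + ennreal (p * S) * (ennreal (rho (B x (w\<theta> x))) * indicator ?S x))"
    proof
      fix x
      have "ennreal (h x) = ennreal (norm (R x) powr p) + ennreal (p * S) * ennreal (rho (B x (w\<theta> x)))"
        unfolding h_def using p S0 rho0 by (simp add: ennreal_mult mult.assoc)
      thus "ennreal (h x) * indicator ?S x = ennreal (norm (R x) powr p) * indicator ?S x + ennreal (p * S) * (ennreal (rho (B x (w\<theta> x))) * indicator ?S x)"
        by (simp add: distrib_right mult.assoc)
    qed
    have I1R: "I1 = (\<integral>\<^sup>+ x. ennreal (norm (R x) powr p) * indicator ?S x \<partial>lborel)"
      unfolding I1_def R_def ..
    have I2R: "I2 = (\<integral>\<^sup>+ x. ennreal (rho (B x (w\<theta> x))) * indicator ?S x \<partial>lborel)"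
      unfolding I2_def ..
    have m2c: "(\<lambda>x. ennreal (p * S) * (ennreal (rho (B x (w\<theta> x))) * indicator ?S x)) \<in> borel_measurable lborel"
      using m2 by measurable
    have Ih: "(\<integral>\<^sup>+ x. ennreal (h x) * indicator ?S x \<partial>lborel) = I1 + ennreal (p * S) * I2"
      unfolding hsplit nn_integral_add[OF m1 m2c] nn_integral_cmult[OF m2] I1R I2R ..
    have IC: "I1 + ennreal (p * S) * I2 \<le> C" unfolding C_def
      by (simp add: add.commute add.left_commute)
    have Ctop: "C < top" using False by (simp add: top.not_eq_extremum)
    have Ihfin: "(\<integral>\<^sup>+ x. ennreal (h x) * indicator ?S x \<partial>lborel) < top"
      unfolding Ih by (rule order.strict_trans1[OF IC Ctop])
    have eqh: "(\<lambda>x. indicator ?S x *\<^sub>R h x) = (\<lambda>x. indicator ?S x *\<^sub>R (norm (R x) powr p) + (p * S) * (indicator ?S x *\<^sub>R rho (B x (w\<theta> x))))"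
      unfolding h_def by (auto simp: indicator_def fun_eq_iff)
    have eqh1: "(\<lambda>x. indicator ?S x *\<^sub>R (norm (R x) powr p)) = (\<lambda>x. norm (indicator ?S x *\<^sub>R R x) powr p)"
      using p by (auto simp: indicator_def fun_eq_iff)
    have mh: "(\<lambda>x. indicator ?S x *\<^sub>R h x) \<in> borel_measurable lborel"
    proof -
      have mh1: "(\<lambda>x. norm (indicator ?S x *\<^sub>R R x) powr p) \<in> borel_measurable lborel"
        using mR by measurable
      have mh2: "(\<lambda>x. (p * S) * (indicator ?S x *\<^sub>R rho (B x (w\<theta> x)))) \<in> borel_measurable lborel"
        by (intro borel_measurable_times borel_measurable_const mr)
      have mh1': "(\<lambda>x. indicator ?S x *\<^sub>R (norm (R x) powr p)) \<in> borel_measurable lborel"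
        using mh1 unfolding eqh1 .
      show ?thesis unfolding eqh by (rule borel_measurable_add[OF mh1' mh2])
    qed
    have eqhn: "(\<lambda>x. ennreal (indicator ?S x *\<^sub>R h x)) = (\<lambda>x. ennreal (h x) * indicator ?S x)"
      by (auto simp: indicator_def fun_eq_iff)
    have h_li: "integrable lborel (\<lambda>x. indicator ?S x *\<^sub>R h x)"
    proof (rule integrableI_nonneg[OF mh])
      show "AE x in lborel. 0 \<le> indicator ?S x *\<^sub>R h x" by (auto simp: h0)
      show "(\<integral>\<^sup>+ x. ennreal (indicator ?S x *\<^sub>R h x) \<partial>lborel) < \<infinity>"
        unfolding eqhn using Ihfin by simp
    qed
    have h_si: "set_integrable lborel ?S h" unfolding set_integrable_def by (rule h_li)
    have h_int: "h integrable_on {0..T}"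
      using set_borel_integral_eq_integral(1)[OF h_si] by (simp add: integrable_on_open_interval_real)
    define H where "H = integral {0..T} h"
    have H0: "0 \<le> H" unfolding H_def by (rule Henstock_Kurzweil_Integration.integral_nonneg[OF h_int h0])
    have "(\<integral>\<^sup>+ x. ennreal (indicator ?S x *\<^sub>R h x) \<partial>lborel) = ennreal (integral\<^sup>L lborel (\<lambda>x. indicator ?S x *\<^sub>R h x))"
      by (rule nn_integral_eq_integral[OF h_li]) (auto simp: h0)
    also have "integral\<^sup>L lborel (\<lambda>x. indicator ?S x *\<^sub>R h x) = H"
      using set_borel_integral_eq_integral(2)[OF h_si]
      unfolding H_def set_lebesgue_integral_def by (simp add: integral_open_interval_real)
    finally have IhH: "I1 + ennreal (p * S) * I2 = ennreal H" using Ih eqhn by simp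
    have CKH: "C = ennreal (K + H)"
      unfolding C_def using IhH H0 by (simp add: K_def add.commute add.left_commute)
    have gK: "g 0 = K" unfolding g_def e_def K_def using w_init by simp
    have gint: "\<And>t. t \<in> {0..T} \<Longrightarrow> g t \<le> (K + H) + integral {0..t} (\<lambda>s. a s * g s)"
    proof -
      fix t assume t: "t \<in> {0..T}"
      have sb: "{0..t} \<subseteq> {0..T}" using t by auto
      have ftc: "(g' has_integral (g t - g 0)) {0..t}"
      proof (rule fundamental_theorem_of_calculus_interior)
        show "0 \<le> t" using t by simp
        show "continuous_on {0..t} g" by (rule continuous_on_subset[OF gcont sb])
        fix x assume x: "x \<in> {0<..<t}"
        hence "x \<in> {0<..<T}" using t by auto
        thus "(g has_vector_derivative g' x) (at x)"
          using dg has_real_derivative_iff_has_vector_derivative by blast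
      qed
      have hi: "h integrable_on {0..t}" by (rule integrable_subinterval_real[OF h_int sb])
      have agi: "(\<lambda>s. a s * g s) integrable_on {0..t}" by (rule integrable_subinterval_real[OF ag_int sb])
      have "((\<lambda>s. h s + a s * g s) has_integral (integral {0..t} h + integral {0..t} (\<lambda>s. a s * g s))) {0..t}"
        by (intro has_integral_add integrable_integral hi agi)
      hence i2: "((\<lambda>s. h s + a s * g s) has_integral (integral {0..t} h + integral {0..t} (\<lambda>s. a s * g s))) {0<..<t}"
        by (simp add: has_integral_Icc_iff_Ioo)
      have i1: "(g' has_integral (g t - g 0)) {0<..<t}" using ftc by (simp add: has_integral_Icc_iff_Ioo)
      have "g t - g 0 \<le> integral {0..t} h + integral {0..t} (\<lambda>s. a s * g s)"
      proof (rule has_integral_le[OF i1 i2])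
        fix x assume x: "x \<in> {0<..<t}"
        hence "x \<in> {0<..<T}" using t by auto
        thus "g' x \<le> h x + a x * g x" using dg by blast
      qed
      moreover have "integral {0..t} h \<le> H"
        unfolding H_def by (rule integral_subset_le[OF sb hi h_int]) (simp add: h0)
      ultimately show "g t \<le> (K + H) + integral {0..t} (\<lambda>s. a s * g s)" using gK by simp
    qed
    have KH0: "0 \<le> K + H" using H0 unfolding K_def by simp
    have gbound: "\<And>t. t \<in> {0..T} \<Longrightarrow> g t \<le> (K + H) * exp ((p - 1) * t + p * L)"
    proof -
      fix t assume t: "t \<in> {0..T}"
      have sb: "{0..t} \<subseteq> {0..T}" using t by auto
      have lamt: "lam integrable_on {0..t}" by (rule integrable_subinterval_real[OF lam_int sb])
      have "g t \<le> (K + H) * exp (integral {0..t} a)"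
        by (rule gronwall[OF gcont _ a_int _ ag_int KH0 gint t]) (simp_all add: g0 a0)
      also have "integral {0..t} a = (p - 1) * t + p * integral {0..t} lam"
      proof -
        have "integral {0..t} a = integral {0..t} (\<lambda>s. p - 1) + integral {0..t} (\<lambda>s. p * lam s)"
          unfolding a_def by (intro integral_add integrable_const_ivl integrable_on_mult_right lamt)
        also have "\<dots> = (p - 1) * t + p * integral {0..t} lam"
          using t by simp
        finally show ?thesis .
      qed
      also have "(K + H) * exp ((p - 1) * t + p * integral {0..t} lam) \<le> (K + H) * exp ((p - 1) * t + p * L)"
      proof (rule mult_left_mono[OF _ KH0])
        have "integral {0..t} lam \<le> L"
          unfolding L_eq by (rule integral_subset_le[OF sb lamt lam_int]) (simp add: lam0)
        thus "exp ((p - 1) * t + p * integral {0..t} lam) \<le> exp ((p - 1) * t + p * L)"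
          using p by simp
      qed
      finally show "g t \<le> (K + H) * exp ((p - 1) * t + p * L)" .
    qed
    define \<kappa> where "\<kappa> = q * (p - 1) / p"
    have kpos: "\<kappa> > 0" unfolding \<kappa>_def using p q by simp
    define Q where "Q = (K + H) powr (q / p) * exp (q * L)"
    have Q0: "0 \<le> Q" unfolding Q_def by simp
    have pw: "\<And>t. t \<in> ?S \<Longrightarrow> norm (w\<theta> t - w t) powr q \<le> Q * exp (\<kappa> * t)"
    proof -
      fix t assume t: "t \<in> ?S"
      hence tT: "t \<in> {0..T}" by simp
      have "norm (w\<theta> t - w t) powr q = g t powr (q / p)" unfolding g_def e_def using p by (simp add: powr_powr)
      also have "\<dots> \<le> ((K + H) * exp ((p - 1) * t + p * L)) powr (q / p)"
        using gbound[OF tT] g0 p q by (intro powr_mono2) auto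
      also have "\<dots> = (K + H) powr (q / p) * exp ((p - 1) * t + p * L) powr (q / p)"
        using KH0 by (simp add: powr_mult)
      also have "exp ((p - 1) * t + p * L) powr (q / p) = exp ((q / p) * ((p - 1) * t + p * L))"
        by (simp add: powr_def)
      also have "(q / p) * ((p - 1) * t + p * L) = \<kappa> * t + q * L"
        unfolding \<kappa>_def using p by (simp add: field_simps)
      finally show "norm (w\<theta> t - w t) powr q \<le> Q * exp (\<kappa> * t)"
        unfolding Q_def by (simp add: exp_add algebra_simps)
    qed
    have le1: "(\<integral>\<^sup>+ t\<in>?S. ennreal (norm (w\<theta> t - w t) powr q) \<partial>lborel) \<le> (\<integral>\<^sup>+ t. ennreal (Q * exp (\<kappa> * t)) * indicator ?S t \<partial>lborel)"
      by (intro nn_integral_mono) (auto simp: indicator_def intro!: ennreal_leI pw)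
    have integ: "((\<lambda>t. Q * exp (\<kappa> * t)) has_integral (Q * (exp (\<kappa> * T) - 1) / \<kappa>)) ?S"
    proof -
      have "((\<lambda>t. Q * exp (\<kappa> * t)) has_integral (Q * exp (\<kappa> * T) / \<kappa> - Q * exp (\<kappa> * 0) / \<kappa>)) {0..T}"
      proof (rule fundamental_theorem_of_calculus[where f="\<lambda>t. Q * exp (\<kappa> * t) / \<kappa>"])
        show "0 \<le> T" using T by simp
        fix x assume "x \<in> {0..T}"
        have "((\<lambda>t. Q * exp (\<kappa> * t) / \<kappa>) has_real_derivative Q * exp (\<kappa> * x)) (at x within {0..T})"
          using kpos by (auto intro!: derivative_eq_intros)
        thus "((\<lambda>t. Q * exp (\<kappa> * t) / \<kappa>) has_vector_derivative Q * exp (\<kappa> * x)) (at x within {0..T})"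
          by (simp add: has_real_derivative_iff_has_vector_derivative)
      qed
      moreover have "Q * exp (\<kappa> * T) / \<kappa> - Q * exp (\<kappa> * 0) / \<kappa> = Q * (exp (\<kappa> * T) - 1) / \<kappa>"
        by (simp add: diff_divide_distrib right_diff_distrib)
      ultimately show ?thesis by (simp add: has_integral_Icc_iff_Ioo)
    qed
    have ev: "(\<integral>\<^sup>+ t. ennreal (Q * exp (\<kappa> * t)) * indicator ?S t \<partial>lborel) = ennreal (Q * (exp (\<kappa> * T) - 1) / \<kappa>)"
      by (rule nn_integral_has_integral_lebesgue'[OF _ integ]) (simp add: Q0)
    have ep: "enn_powr C (q / p) = ennreal ((K + H) powr (q / p))"
      unfolding enn_powr_def CKH using KH0 by simp
    have "Q * (exp (\<kappa> * T) - 1) / \<kappa> = (K + H) powr (q / p) * Z * exp (q * L)"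
      unfolding Q_def Z_def \<kappa>_def using p q by (simp add: field_simps)
    hence "ennreal (Q * (exp (\<kappa> * T) - 1) / \<kappa>) = enn_powr C (q / p) * ennreal Z * ennreal (exp (q * L))"
      unfolding ep using Zpos by (simp add: ennreal_mult)
    hence fin: "(\<integral>\<^sup>+ t\<in>?S. ennreal (norm (w\<theta> t - w t) powr q) \<partial>lborel) \<le> enn_powr C (q / p) * ennreal Z * ennreal (exp (q * L))"
      using le1 ev by simp
    thus ?thesis unfolding C_def I1_def I2_def K_def S_def Z_def L_def by simp

  qed
qed

end
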